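(* In the game described in the context, let $\mu\in\Pi_1^{SD}$ and $\nu\in\Pi_2^{SD}$ be essentially proper. Then (i) the pair $(\mu,\nu)$ is non-prolonging; and (ii) $\bar x(\mu)\ge\tilde x(\nu)$ componentwise, where $\bar x(\mu)$ and $\tilde x(\nu)$ are the unique solutions of $x=T_\mu x$ and $x=\tilde T_\nu x$, respectively.
   Context: Game model. $S=\{1,\dots,n\}$, $S_o=S\cup\{0\}$, $0$ an absorbing cost-free termination state. At $i\in S$ player I picks $\bar u\in\bar U(i)$, player II picks $\bar v\in\bar V(i)$, where $\bar U(i),\bar V(i)$ are compact subsets of complete separable metric spaces; an expected cost $c_i(\bar u,\bar v)\in\mathbb{R}$ is incurred by player I (reward to player II) and the state moves to $j\in S_o$ with probability $p_{ij}(\bar u,\bar v)$. Standing assumption: for all $i,j\in S$, $p_{ij}$ is continuous on $\bar U(i)\times\bar V(i)$, and $c_i$ is lower semicontinuous in $\bar u$ for fixed $\bar v$ and upper semicontinuous in $\bar v$ for fixed $\bar u$. For policies $\pi_1,\pi_2$ (history-dependent randomized), $x_i(\pi_1,\pi_2)=\liminf_{t\to\infty}E_{\pi_1\pi_2}[\sum_{k=0}^tc_{i_k}(\bar u_k,\bar v_k)\mid i_0=i]$. $\Pi_1^{SD}=\{\mu:\mu(i)\in\bar U(i)\}$, $\Pi_2^{SD}=\{\nu:\nu(i)\in\bar V(i)\}$. With $c(\mu,\nu)_i=c_i(\mu(i),\nu(i))$ and $P(\mu,\nu)_{ij}=p_{ij}(\mu(i),\nu(i))$, $i,j\in S$: $T_{\mu\nu}x=c(\mu,\nu)+P(\mu,\nu)x$,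 $T_\mu x=\sup_{\nu\in\Pi_2^{SD}}T_{\mu\nu}x$, $\tilde T_\nu x=\inf_{\mu\in\Pi_1^{SD}}T_{\mu\nu}x$ (componentwise). A pair of policies is prolonging if for some initial state the termination state is, with positive probability, never reached; otherwise non-prolonging. Essentially proper: $\mu\in\Pi_1^{SD}$ is essentially proper if there is $\nu\in\Pi_2^{SD}$ with $(\mu,\nu)$ non-prolonging and every $\nu\in\Pi_2^{SD}$ with $(\mu,\nu)$ prolonging has $x_i(\mu,\nu)=-\infty$ for some $i$. $\nu\in\Pi_2^{SD}$ is essentially proper if there is $\mu\in\Pi_1^{SD}$ with $(\mu,\nu)$ non-prolonging and every $\mu$ with $(\mu,\nu)$ prolonging has $x_i(\mu,\nu)=+\infty$ for some $i$. For essentially proper $\mu$ (resp. $\nu$) the equation $x=T_\mu x$ (resp. $x=\tilde T_\nu x$) has a unique solution in $\mathbb{R}^n$. *)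

theory Defs
  imports "HOL-Analysis.Analysis"
begin

text \<open>States S = the finite type 's (n = CARD('s)); the termination state 0 is kept
  implicit: p i j u v is the probability of moving from i to j in S, and the
  probability of moving to 0 is 1 - (sum over j of p i j u v).\<close>

definition lsc_on :: "'a::topological_space set \<Rightarrow> ('a \<Rightarrow> real) \<Rightarrow> bool" where
  "lsc_on A f \<longleftrightarrow> (\<forall>a\<in>A. \<forall>t. t < f a \<longrightarrow> (\<forall>\<^sub>F u in at a within A. t < f u))"

definition usc_on :: "'a::topological_space set \<Rightarrow> ('a \<Rightarrow> real) \<Rightarrow> bool" where
  "usc_on A f \<longleftrightarrow> (\<forall>a\<in>A. \<forall>t. f a < t \<longrightarrow> (\<forall>\<^sub>F u in at a within A. f u < t))"

definition game_model ::
  "('s::finite \<Rightarrow> 'u::polish_space set) \<Rightarrow> ('s \<Rightarrow> 'v::polish_space set)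
   \<Rightarrow> ('s \<Rightarrow> 's \<Rightarrow> 'u \<Rightarrow> 'v \<Rightarrow> real) \<Rightarrow> ('s \<Rightarrow> 'u \<Rightarrow> 'v \<Rightarrow> real) \<Rightarrow> bool" where
  "game_model U V p c \<longleftrightarrow>
     (\<forall>i. compact (U i) \<and> compact (V i)) \<and>
     (\<forall>i. \<forall>u\<in>U i. \<forall>v\<in>V i. (\<forall>j. 0 \<le> p i j u v) \<and> (\<Sum>j\<in>UNIV. p i j u v) \<le> 1) \<and>
     (\<forall>i j. continuous_on (U i \<times> V i) (\<lambda>(u, v). p i j u v)) \<and>
     (\<forall>i. \<forall>v\<in>V i. lsc_on (U i) (\<lambda>u. c i u v)) \<and>
     (\<forall>i. \<forall>u\<in>U i. usc_on (V i) (\<lambda>v. c i u v))"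

definition Pi_SD :: "('s \<Rightarrow> 'a set) \<Rightarrow> ('s \<Rightarrow> 'a) set" where
  "Pi_SD U = {\<mu>. \<forall>i. \<mu> i \<in> U i}"

definition Pmat :: "('s \<Rightarrow> 's \<Rightarrow> 'u \<Rightarrow> 'v \<Rightarrow> real) \<Rightarrow> ('s \<Rightarrow> 'u) \<Rightarrow> ('s \<Rightarrow> 'v) \<Rightarrow> 's \<Rightarrow> 's \<Rightarrow> real" where
  "Pmat p \<mu> \<nu> i j = p i j (\<mu> i) (\<nu> i)"

definition cvec :: "('s \<Rightarrow> 'u \<Rightarrow> 'v \<Rightarrow> real) \<Rightarrow> ('s \<Rightarrow> 'u) \<Rightarrow> ('s \<Rightarrow> 'v) \<Rightarrow> 's \<Rightarrow> real" where
  "cvec c \<mu> \<nu> i = c i (\<mu> i) (\<nu> i)"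

definition stepv :: "('s::finite \<Rightarrow> 's \<Rightarrow> real) \<Rightarrow> ('s \<Rightarrow> real) \<Rightarrow> 's \<Rightarrow> real" where
  "stepv P f = (\<lambda>i. \<Sum>j\<in>UNIV. P i j * f j)"

text \<open>Probability, starting from i, that the termination state is never reached:
  the limit (infimum of the decreasing sequence) of the probabilities
  (P^k 1)_i of not having terminated by time k.\<close>
definition nonterm_prob :: "('s::finite \<Rightarrow> 's \<Rightarrow> real) \<Rightarrow> 's \<Rightarrow> real" where
  "nonterm_prob P i = (INF k. (stepv P ^^ k) (\<lambda>_. 1) i)"

definition prolonging :: "('s::finite \<Rightarrow> 's \<Rightarrow> 'u \<Rightarrow> 'v \<Rightarrow> real) \<Rightarrow> ('s \<Rightarrow> 'u) \<Rightarrow> ('s \<Rightarrow> 'v) \<Rightarrow> bool" where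
  "prolonging p \<mu> \<nu> \<longleftrightarrow> (\<exists>i. nonterm_prob (Pmat p \<mu> \<nu>) i > 0)"

text \<open>x_i(mu,nu) = liminf_t E[sum_{k=0}^t c_{i_k}] = liminf_t sum_{k=0}^t (P^k c)_i.\<close>
definition cost :: "('s::finite \<Rightarrow> 's \<Rightarrow> 'u \<Rightarrow> 'v \<Rightarrow> real) \<Rightarrow> ('s \<Rightarrow> 'u \<Rightarrow> 'v \<Rightarrow> real)
    \<Rightarrow> ('s \<Rightarrow> 'u) \<Rightarrow> ('s \<Rightarrow> 'v) \<Rightarrow> 's \<Rightarrow> ereal" where
  "cost p c \<mu> \<nu> i =
     liminf (\<lambda>t. ereal (\<Sum>k\<le>t. (stepv (Pmat p \<mu> \<nu>) ^^ k) (cvec c \<mu> \<nu>) i))"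

definition T_pair :: "('s::finite \<Rightarrow> 's \<Rightarrow> 'u \<Rightarrow> 'v \<Rightarrow> real) \<Rightarrow> ('s \<Rightarrow> 'u \<Rightarrow> 'v \<Rightarrow> real)
    \<Rightarrow> ('s \<Rightarrow> 'u) \<Rightarrow> ('s \<Rightarrow> 'v) \<Rightarrow> ('s \<Rightarrow> real) \<Rightarrow> 's \<Rightarrow> real" where
  "T_pair p c \<mu> \<nu> x = (\<lambda>i. cvec c \<mu> \<nu> i + stepv (Pmat p \<mu> \<nu>) x i)"

definition T_mu :: "('s::finite \<Rightarrow> 'v set) \<Rightarrow> ('s \<Rightarrow> 's \<Rightarrow> 'u \<Rightarrow> 'v \<Rightarrow> real) \<Rightarrow> ('s \<Rightarrow> 'u \<Rightarrow> 'v \<Rightarrow> real)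
    \<Rightarrow> ('s \<Rightarrow> 'u) \<Rightarrow> ('s \<Rightarrow> real) \<Rightarrow> 's \<Rightarrow> real" where
  "T_mu V p c \<mu> x = (\<lambda>i. SUP \<nu>\<in>Pi_SD V. T_pair p c \<mu> \<nu> x i)"

definition T_nu :: "('s::finite \<Rightarrow> 'u set) \<Rightarrow> ('s \<Rightarrow> 's \<Rightarrow> 'u \<Rightarrow> 'v \<Rightarrow> real) \<Rightarrow> ('s \<Rightarrow> 'u \<Rightarrow> 'v \<Rightarrow> real)
    \<Rightarrow> ('s \<Rightarrow> 'v) \<Rightarrow> ('s \<Rightarrow> real) \<Rightarrow> 's \<Rightarrow> real" where
  "T_nu U p c \<nu> x = (\<lambda>i. INF \<mu>\<in>Pi_SD U. T_pair p c \<mu> \<nu> x i)"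

definition ess_proper1 :: "('s::finite \<Rightarrow> 'v set) \<Rightarrow> ('s \<Rightarrow> 's \<Rightarrow> 'u \<Rightarrow> 'v \<Rightarrow> real)
    \<Rightarrow> ('s \<Rightarrow> 'u \<Rightarrow> 'v \<Rightarrow> real) \<Rightarrow> ('s \<Rightarrow> 'u) \<Rightarrow> bool" where
  "ess_proper1 V p c \<mu> \<longleftrightarrow>
     (\<exists>\<nu>\<in>Pi_SD V. \<not> prolonging p \<mu> \<nu>) \<and>
     (\<forall>\<nu>\<in>Pi_SD V. prolonging p \<mu> \<nu> \<longrightarrow> (\<exists>i. cost p c \<mu> \<nu> i = -\<infinity>))"

definition ess_proper2 :: "('s::finite \<Rightarrow> 'u set) \<Rightarrow> ('s \<Rightarrow> 's \<Rightarrow> 'u \<Rightarrow> 'v \<Rightarrow> real)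
    \<Rightarrow> ('s \<Rightarrow> 'u \<Rightarrow> 'v \<Rightarrow> real) \<Rightarrow> ('s \<Rightarrow> 'v) \<Rightarrow> bool" where
  "ess_proper2 U p c \<nu> \<longleftrightarrow>
     (\<exists>\<mu>\<in>Pi_SD U. \<not> prolonging p \<mu> \<nu>) \<and>
     (\<forall>\<mu>\<in>Pi_SD U. prolonging p \<mu> \<nu> \<longrightarrow> (\<exists>i. cost p c \<mu> \<nu> i = \<infinity>))"

end

theory Submission
  imports Defs
begin

definition nonnegm :: "('s::finite \<Rightarrow> 's \<Rightarrow> real) \<Rightarrow> bool" where
  "nonnegm P \<longleftrightarrow> (\<forall>i j. 0 \<le> P i j)"
definition substoch :: "('s::finite \<Rightarrow> 's \<Rightarrow> real) \<Rightarrow> bool" where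
  "substoch P \<longleftrightarrow> nonnegm P \<and> (\<forall>i. (\<Sum>j\<in>UNIV. P i j) \<le> 1)"

lemma stepv_add: "stepv P (\<lambda>i. f i + g i) = (\<lambda>i. stepv P f i + stepv P g i)"
  by (auto simp: stepv_def sum.distrib distrib_left)
lemma stepv_diff: "stepv P (\<lambda>i. f i - g i) = (\<lambda>i. stepv P f i - stepv P g i)"
  by (auto simp: stepv_def sum_subtractf right_diff_distrib)
lemma stepv_scale: "stepv P (\<lambda>i. a * f i) = (\<lambda>i. a * stepv P f i)"
  by (auto simp: stepv_def sum_distrib_left mult_ac)
lemma stepv_neg: "stepv P (\<lambda>i. - f i) = (\<lambda>i. - stepv P f i)"
  by (auto simp: stepv_def sum_negf)

lemma iter_diff: "(stepv P ^^ k) (\<lambda>i. f i - g i) = (\<lambda>i. (stepv P ^^ k) f i - (stepv P ^^ k) g i)"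
  by (induction k) (auto simp: stepv_diff)
lemma iter_neg: "(stepv P ^^ k) (\<lambda>i. - f i) = (\<lambda>i. - (stepv P ^^ k) f i)"
  by (induction k) (auto simp: stepv_neg)

lemma stepv_mono: "nonnegm P \<Longrightarrow> (\<And>j. f j \<le> g j) \<Longrightarrow> stepv P f i \<le> stepv P g i"
  unfolding stepv_def nonnegm_def by (intro sum_mono mult_left_mono) auto
lemma iter_mono: "nonnegm P \<Longrightarrow> (\<And>j. f j \<le> g j) \<Longrightarrow> (stepv P ^^ k) f i \<le> (stepv P ^^ k) g i"
proof (induction k arbitrary: i)
  case (Suc k) then show ?case by (simp add: stepv_mono)
qed simp

lemma stepv_nonneg: "nonnegm P \<Longrightarrow> (\<And>j. 0 \<le> f j) \<Longrightarrow> 0 \<le> stepv P f i"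
  unfolding stepv_def nonnegm_def by (intro sum_nonneg mult_nonneg_nonneg) auto
lemma iter_nonneg: "nonnegm P \<Longrightarrow> (\<And>j. 0 \<le> f j) \<Longrightarrow> 0 \<le> (stepv P ^^ k) f i"
proof (induction k arbitrary: i)
  case (Suc k) then show ?case by (simp add: stepv_nonneg)
qed simp

lemma stepv_abs: assumes "substoch P" "\<And>j. \<bar>f j\<bar> \<le> B" shows "\<bar>stepv P f i\<bar> \<le> B"
proof -
  have B: "0 \<le> B" using assms(2)[of undefined] by linarith
  have "\<bar>stepv P f i\<bar> \<le> (\<Sum>j\<in>UNIV. \<bar>P i j * f j\<bar>)" unfolding stepv_def by (rule sum_abs)
  also have "\<dots> \<le> (\<Sum>j\<in>UNIV. P i j * B)"
    using assms unfolding substoch_def nonnegm_def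
    by (intro sum_mono) (auto simp: abs_mult intro: mult_left_mono)
  also have "\<dots> = B * (\<Sum>j\<in>UNIV. P i j)" by (simp add: sum_distrib_left mult_ac)
  also have "\<dots> \<le> B" using assms B unfolding substoch_def
    by (metis mult.right_neutral mult_left_mono)
  finally show ?thesis .
qed
lemma iter_abs: assumes "substoch P" "\<And>j. \<bar>f j\<bar> \<le> B" shows "\<bar>(stepv P ^^ k) f i\<bar> \<le> B"
  using assms(2)
proof (induction k arbitrary: i)
  case (Suc k) then show ?case using stepv_abs[OF assms(1)] by simp
qed simp

lemma iter_Suc_right: "(stepv P ^^ Suc k) f = (stepv P ^^ k) (stepv P f)"
  by (simp add: funpow_Suc_right del: funpow.simps)


lemma lowerL:
  assumes P: "substoch P" and c: "\<And>i. H i - stepv P H i \<le> c i" and B: "\<And>j. \<bar>H j\<bar> \<le> B"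
  shows "- 2 * B \<le> (\<Sum>k\<le>t. (stepv P ^^ k) c i)"
proof -
  have nn: "nonnegm P" using P by (simp add: substoch_def)
  have key: "H i - (stepv P ^^ Suc t) H i \<le> (\<Sum>k\<le>t. (stepv P ^^ k) c i)" for i
  proof (induction t arbitrary: i)
    case 0 then show ?case using c by simp
  next
    case (Suc t)
    have "(stepv P ^^ Suc t) (\<lambda>i. H i - stepv P H i) i \<le> (stepv P ^^ Suc t) c i"
      by (rule iter_mono[OF nn c])
    moreover have "(stepv P ^^ Suc t) (\<lambda>i. H i - stepv P H i) i
        = (stepv P ^^ Suc t) H i - (stepv P ^^ Suc (Suc t)) H i"
      by (simp only: iter_diff iter_Suc_right[where k="Suc t"])
    ultimately show ?case using Suc[of i] by simp
  qed
  have "\<bar>(stepv P ^^ Suc t) H i\<bar> \<le> B" by (rule iter_abs[OF P B])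
  moreover have "\<bar>H i\<bar> \<le> B" by (rule B)
  ultimately show ?thesis using key[of i] by linarith
qed

lemma cost_lower:
  assumes P: "substoch (Pmat p \<mu> \<nu>)" and c: "\<And>i. H i - stepv (Pmat p \<mu> \<nu>) H i \<le> cvec c \<mu> \<nu> i"
  shows "cost p c \<mu> \<nu> i \<noteq> -\<infinity>"
proof -
  define B where "B = (\<Sum>j\<in>UNIV. \<bar>H j\<bar>)"
  have Bj: "\<bar>H j\<bar> \<le> B" for j unfolding B_def by (rule member_le_sum) auto
  have "ereal (- 2 * B) \<le> cost p c \<mu> \<nu> i"
    unfolding cost_def
    by (rule Liminf_bounded) (use lowerL[OF P c Bj] in auto)
  then show ?thesis by auto
qed

lemma cost_upper:
  assumes P: "substoch (Pmat p \<mu> \<nu>)" and c: "\<And>i. cvec c \<mu> \<nu> i \<le> H i - stepv (Pmat p \<mu> \<nu>) H i"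
  shows "cost p c \<mu> \<nu> i \<noteq> \<infinity>"
proof -
  define B where "B = (\<Sum>j\<in>UNIV. \<bar>H j\<bar>)"
  have Bj: "\<bar>(\<lambda>j. - H j) j\<bar> \<le> B" for j unfolding B_def by (auto intro: member_le_sum)
  have c': "(\<lambda>j. - H j) i - stepv (Pmat p \<mu> \<nu>) (\<lambda>j. - H j) i \<le> (\<lambda>i. - cvec c \<mu> \<nu> i) i" for i
    using c[of i] by (simp add: stepv_neg)
  have "- 2 * B \<le> (\<Sum>k\<le>t. (stepv (Pmat p \<mu> \<nu>) ^^ k) (\<lambda>i. - cvec c \<mu> \<nu> i) i)" for t
    by (rule lowerL[OF P c' Bj])
  then have "(\<Sum>k\<le>t. (stepv (Pmat p \<mu> \<nu>) ^^ k) (cvec c \<mu> \<nu>) i) \<le> 2 * B" for t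
    by (simp add: iter_neg sum_negf)
  then have "cost p c \<mu> \<nu> i \<le> ereal (2 * B)"
    unfolding cost_def by (intro Liminf_le) auto
  then show ?thesis by auto
qed


lemma one_dec: assumes "substoch P" shows "(stepv P ^^ Suc k) (\<lambda>_. 1) i \<le> (stepv P ^^ k) (\<lambda>_. 1) i"
proof -
  have nn: "nonnegm P" using assms by (simp add: substoch_def)
  have "stepv P (\<lambda>_. 1) j \<le> 1" for j using assms by (simp add: substoch_def stepv_def)
  then have "(stepv P ^^ k) (stepv P (\<lambda>_. 1)) i \<le> (stepv P ^^ k) (\<lambda>_. 1) i"
    by (intro iter_mono[OF nn]) auto
  then show ?thesis by (simp only: iter_Suc_right)
qed

lemma one_decseq: "substoch P \<Longrightarrow> decseq (\<lambda>k. (stepv P ^^ k) (\<lambda>_. 1) i)"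
  by (rule decseq_SucI) (rule one_dec)

lemma one_nonneg: "substoch P \<Longrightarrow> 0 \<le> (stepv P ^^ k) (\<lambda>_. 1) i"
  by (rule iter_nonneg) (auto simp: substoch_def)

lemma transient:
  fixes P :: "'s::finite \<Rightarrow> 's \<Rightarrow> real"
  assumes P: "substoch P" and nt: "\<And>i. nonterm_prob P i \<le> 0"
  shows "\<exists>\<zeta>. (\<forall>i. 0 \<le> \<zeta> i) \<and> (\<forall>i. 1/2 \<le> \<zeta> i - stepv P \<zeta> i)"
proof -
  have nn: "nonnegm P" using P by (simp add: substoch_def)
  define a where "a k = (stepv P ^^ k) (\<lambda>_. 1)" for k
  have "\<exists>k. a k i < 1/2" for i
  proof -
    have "(INF k. a k i) < 1/2" using nt[of i] unfolding nonterm_prob_def a_def by simp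
    moreover have "bdd_below (range (\<lambda>k. a k i))"
      unfolding a_def using one_nonneg[OF P] by (intro bdd_belowI) auto
    ultimately show ?thesis by (subst (asm) cINF_less_iff) auto
  qed
  then obtain kk where kk: "\<And>i. a (kk i) i < 1/2" by metis
  define m where "m = Max (range kk)"
  have am: "a m i < 1/2" for i
  proof -
    have "kk i \<le> m" unfolding m_def by (rule Max_ge) auto
    then have "a m i \<le> a (kk i) i" using decseqD[OF one_decseq[OF P]] unfolding a_def by blast
    then show ?thesis using kk[of i] by linarith
  qed
  define z where "z k = ((\<lambda>w i. 1 + stepv P w i) ^^ k) (\<lambda>_. 0)" for k
  have zS: "z (Suc k) = (\<lambda>i. 1 + stepv P (z k) i)" for k by (simp add: z_def)
  have znn: "0 \<le> z k i" for k i
  proof (induction k arbitrary: i)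
    case 0 then show ?case by (simp add: z_def)
  next
    case (Suc k) then show ?case using stepv_nonneg[OF nn, of "z k"] by (simp add: zS)
  qed
  have aS: "a (Suc k) = stepv P (a k)" for k by (simp add: a_def)
  have zeq: "z k i - stepv P (z k) i = 1 - a k i" for k i
  proof (induction k arbitrary: i)
    case 0 then show ?case by (simp add: z_def a_def stepv_def)
  next
    case (Suc k)
    have e1: "(\<lambda>i. z k i - stepv P (z k) i) = (\<lambda>i. 1 - a k i)" using Suc by auto
    have "stepv P (z (Suc k)) i = stepv P (\<lambda>_. 1) i + stepv P (stepv P (z k)) i"
      by (simp add: zS stepv_add)
    moreover have "stepv P (\<lambda>i. z k i - stepv P (z k) i) i = stepv P (\<lambda>i. 1 - a k i) i"
      by (simp only: e1)
    then have "stepv P (z k) i - stepv P (stepv P (z k)) i = stepv P (\<lambda>_. 1) i - stepv P (a k) i"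
      by (simp add: stepv_diff)
    ultimately show ?case by (simp add: zS aS)
  qed
  show ?thesis
    by (rule exI[of _ "z m"]) (use znn zeq am in \<open>auto simp: less_imp_le\<close>)
qed


lemma mod_lower:
  fixes P Pa :: "'s::finite \<Rightarrow> 's \<Rightarrow> real"
  assumes P: "substoch P" and Pa: "substoch Pa" and nt: "\<And>i. nonterm_prob Pa i \<le> 0"
    and Cz: "\<And>i j. i \<in> C \<Longrightarrow> j \<notin> C \<Longrightarrow> P i j = 0"
    and pois: "\<And>i. i \<in> C \<Longrightarrow> h i - stepv P h i = c i - g" and g: "0 \<le> g"
  shows "\<exists>H. \<forall>i. H i - stepv (\<lambda>i j. if i \<in> C then P i j else Pa i j) H i
                 \<le> (if i \<in> C then c i else ca i)"
proof -
  obtain \<zeta> where \<zeta>0: "\<And>i. 0 \<le> \<zeta> i" and \<zeta>1: "\<And>i. 1/2 \<le> \<zeta> i - stepv Pa \<zeta> i"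
    using transient[OF Pa nt] by blast
  have nna: "nonnegm Pa" using Pa by (simp add: substoch_def)
  define z where "z i = (if i \<in> C then 0 else \<zeta> i)" for i
  define Bh where "Bh = (\<Sum>j\<in>UNIV. \<bar>h j\<bar>)"
  define Bc where "Bc = (\<Sum>j\<in>UNIV. \<bar>ca j\<bar>)"
  have hB: "\<bar>h j\<bar> \<le> Bh" for j unfolding Bh_def by (rule member_le_sum) auto
  have cB: "\<bar>ca j\<bar> \<le> Bc" for j unfolding Bc_def by (rule member_le_sum) auto
  define K where "K = 2 * (2 * Bh + Bc)"
  define H where "H i = h i - K * z i" for i
  let ?Q = "\<lambda>i j. if i \<in> C then P i j else Pa i j"
  have "H i - stepv ?Q H i \<le> (if i \<in> C then c i else ca i)" for i
  proof (cases "i \<in> C")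
    case True
    have "stepv P z i = 0" unfolding stepv_def z_def
      by (rule sum.neutral) (auto simp: Cz[OF True])
    then have "stepv ?Q H i = stepv P h i" using True
      unfolding H_def by (simp add: stepv_diff stepv_scale stepv_def[of "\<lambda>i j. if i \<in> C then P i j else Pa i j"] stepv_def[of P])
    then show ?thesis using True pois[OF True] g unfolding H_def z_def by simp
  next
    case False
    have sQ: "stepv ?Q H i = stepv Pa h i - K * stepv Pa z i" using False
      unfolding H_def by (simp add: stepv_diff stepv_scale stepv_def[of "\<lambda>i j. if i \<in> C then P i j else Pa i j"] stepv_def[of Pa])
    have "stepv Pa z i \<le> stepv Pa \<zeta> i" by (rule stepv_mono[OF nna]) (auto simp: z_def \<zeta>0)
    then have "1/2 \<le> z i - stepv Pa z i" using \<zeta>1[of i] False by (simp add: z_def)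
    moreover have "\<bar>stepv Pa h i\<bar> \<le> Bh" by (rule stepv_abs[OF Pa hB])
    moreover have "0 \<le> K" unfolding K_def Bh_def Bc_def by (simp add: sum_nonneg)
    ultimately have "K * (1/2) \<le> K * (z i - stepv Pa z i)" by (intro mult_left_mono) auto
    then show ?thesis using False sQ hB[of i] cB[of i] \<open>\<bar>stepv Pa h i\<bar> \<le> Bh\<close>
      unfolding H_def K_def by (simp add: algebra_simps)
  qed
  then show ?thesis by blast
qed


definition closedset :: "('s::finite \<Rightarrow> 's \<Rightarrow> real) \<Rightarrow> 's set \<Rightarrow> bool" where
  "closedset P C \<longleftrightarrow> C \<noteq> {} \<and> (\<forall>i\<in>C. (\<Sum>j\<in>C. P i j) = 1)"

lemma closed_zero:
  assumes P: "substoch P" and C: "closedset P C" and i: "i \<in> C" and j: "j \<notin> C"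
  shows "P i j = 0"
proof -
  have nn: "\<And>a b. 0 \<le> P a b" using P by (simp add: substoch_def nonnegm_def)
  have "(\<Sum>j\<in>UNIV. P i j) = (\<Sum>j\<in>C. P i j) + (\<Sum>j\<in>-C. P i j)"
    using sum.subset_diff[of C UNIV "P i"] by (simp add: Compl_eq_Diff_UNIV)
  moreover have "(\<Sum>j\<in>UNIV. P i j) \<le> 1" using P by (simp add: substoch_def)
  moreover have "(\<Sum>j\<in>C. P i j) = 1" using C i by (simp add: closedset_def)
  ultimately have "(\<Sum>j\<in>-C. P i j) \<le> 0" by linarith
  then have "(\<Sum>j\<in>-C. P i j) = 0" using nn by (simp add: sum_nonneg order_antisym)
  then show ?thesis using nn j by (subst (asm) sum_nonneg_eq_0_iff) auto
qed

lemma exists_closed: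
  fixes P :: "'s::finite \<Rightarrow> 's \<Rightarrow> real"
  assumes P: "substoch P" and pr: "\<exists>i. nonterm_prob P i > 0"
  shows "\<exists>C. closedset P C"
proof -
  have nn: "\<And>a b. 0 \<le> P a b" using P by (simp add: substoch_def nonnegm_def)
  define a where "a k = (stepv P ^^ k) (\<lambda>_. 1)" for k
  define q where "q i = nonterm_prob P i" for i
  have lim: "(\<lambda>k. a k i) \<longlonglongrightarrow> q i" for i
    unfolding a_def q_def nonterm_prob_def by (rule LIMSEQ_decseq_INF[OF _ one_decseq[OF P]])
       (rule bdd_belowI[of _ 0], use one_nonneg[OF P] in auto)
  have q0: "0 \<le> q i" for i
    using lim[of i] one_nonneg[OF P] unfolding a_def
    by (intro LIMSEQ_le_const[OF lim]) (auto simp: a_def)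
  have qeq: "q i = stepv P q i" for i
  proof -
    have "(\<lambda>k. stepv P (a k) i) \<longlonglongrightarrow> stepv P q i"
      unfolding stepv_def by (intro tendsto_intros lim)
    moreover have "(\<lambda>k. stepv P (a k) i) = (\<lambda>k. a (Suc k) i)" by (simp add: a_def)
    ultimately show ?thesis using LIMSEQ_Suc[OF lim[of i]] LIMSEQ_unique by metis
  qed
  define \<beta> where "\<beta> = Max (range q)"
  have qb: "q i \<le> \<beta>" for i unfolding \<beta>_def by (rule Max_ge) auto
  obtain i0 where "q i0 = \<beta>" proof -
    have "\<beta> \<in> range q" unfolding \<beta>_def by (rule Max_in) auto
    then show ?thesis using that by auto
  qed
  obtain i1 where "q i1 > 0" using pr unfolding q_def by auto
  then have bpos: "\<beta> > 0" using qb[of i1] by linarith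
  define C where "C = {i. q i = \<beta>}"
  have "(\<Sum>j\<in>C. P l j) = 1" if l: "l \<in> C" for l
  proof -
    have t0: "0 \<le> P l j * (\<beta> - q j)" for j using nn qb by simp
    have r1: "(\<Sum>j\<in>UNIV. P l j) \<le> 1" using P by (simp add: substoch_def)
    have "(\<Sum>j\<in>UNIV. P l j * (\<beta> - q j)) = \<beta> * (\<Sum>j\<in>UNIV. P l j) - stepv P q l"
      by (simp add: stepv_def algebra_simps sum_subtractf sum_distrib_left)
    also have "\<dots> = \<beta> * ((\<Sum>j\<in>UNIV. P l j) - 1)" using qeq[of l] l by (simp add: C_def algebra_simps)
    finally have e: "(\<Sum>j\<in>UNIV. P l j * (\<beta> - q j)) = \<beta> * ((\<Sum>j\<in>UNIV. P l j) - 1)" .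
    have "\<beta> * ((\<Sum>j\<in>UNIV. P l j) - 1) \<le> 0" using bpos r1 by (simp add: mult_nonneg_nonpos)
    moreover have "0 \<le> (\<Sum>j\<in>UNIV. P l j * (\<beta> - q j))" by (rule sum_nonneg) (use t0 in auto)
    ultimately have s0: "(\<Sum>j\<in>UNIV. P l j * (\<beta> - q j)) = 0" and "\<beta> * ((\<Sum>j\<in>UNIV. P l j) - 1) = 0"
      using e by linarith+
    then have r: "(\<Sum>j\<in>UNIV. P l j) = 1" using bpos by simp
    have "P l j * (\<beta> - q j) = 0" for j using s0 t0 by (subst (asm) sum_nonneg_eq_0_iff) auto
    then have z: "j \<notin> C \<Longrightarrow> P l j = 0" for j using qb[of j] by (auto simp: C_def)
    have "(\<Sum>j\<in>UNIV. P l j) = (\<Sum>j\<in>C. P l j)"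
      by (rule sum.mono_neutral_right) (use z in auto)
    then show ?thesis using r by simp
  qed
  moreover have "C \<noteq> {}" using \<open>q i0 = \<beta>\<close> by (auto simp: C_def)
  ultimately show ?thesis unfolding closedset_def by blast
qed

lemma exists_min_closed:
  fixes P :: "'s::finite \<Rightarrow> 's \<Rightarrow> real"
  assumes "closedset P C0"
  shows "\<exists>C. closedset P C \<and> (\<forall>D. closedset P D \<longrightarrow> D \<subseteq> C \<longrightarrow> D = C)"
proof -
  obtain C where C: "closedset P C" and m: "\<forall>D. closedset P D \<longrightarrow> card C \<le> card D"
    using ex_has_least_nat[of "closedset P" C0 card] assms by blast
  have "D = C" if "closedset P D" "D \<subseteq> C" for D
    using card_subset_eq[of C D] m that by (meson finite le_antisym card_mono)
  then show ?thesis using C by blast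
qed


lemma closed_rowsum:
  assumes P: "substoch P" and C: "closedset P C" and i: "i \<in> C"
  shows "(\<Sum>j\<in>UNIV. P i j) = 1"
proof -
  have "(\<Sum>j\<in>UNIV. P i j) = (\<Sum>j\<in>C. P i j)"
    by (rule sum.mono_neutral_right) (auto simp: closed_zero[OF P C i])
  then show ?thesis using C i by (simp add: closedset_def)
qed

lemma invariant_pos:
  fixes P :: "'s::finite \<Rightarrow> 's \<Rightarrow> real"
  assumes P: "substoch P" and C: "closedset P C"
    and minC: "\<forall>D. closedset P D \<longrightarrow> D \<subseteq> C \<longrightarrow> D = C"
    and zC: "\<And>j. j \<notin> C \<Longrightarrow> z j = 0"
    and inv: "\<And>j. z j = (\<Sum>i\<in>UNIV. z i * P i j)"
  shows "{i. z i > 0} = {} \<or> {i. z i > 0} = C"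
proof -
  have nn: "\<And>a b. 0 \<le> P a b" using P by (simp add: substoch_def nonnegm_def)
  define y where "y i = max (z i) 0" for i
  have y0: "0 \<le> y i" for i by (simp add: y_def)
  have yle: "y j \<le> (\<Sum>i\<in>UNIV. y i * P i j)" for j
  proof -
    have "(\<Sum>i\<in>UNIV. z i * P i j) \<le> (\<Sum>i\<in>UNIV. y i * P i j)"
      by (intro sum_mono mult_right_mono) (auto simp: y_def nn)
    moreover have "0 \<le> (\<Sum>i\<in>UNIV. y i * P i j)" by (intro sum_nonneg) (simp add: y0 nn)
    ultimately show ?thesis using inv[of j] by (simp add: y_def)
  qed
  have yC: "y i = 0" if "i \<notin> C" for i using zC[OF that] by (simp add: y_def)
  have "(\<Sum>j\<in>UNIV. \<Sum>i\<in>UNIV. y i * P i j) = (\<Sum>i\<in>UNIV. y i * (\<Sum>j\<in>UNIV. P i j))"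
    by (subst sum.swap) (simp add: sum_distrib_left)
  also have "\<dots> = (\<Sum>i\<in>UNIV. y i)"
    by (rule sum.cong) (auto simp: yC closed_rowsum[OF P C] cong: if_cong, metis closed_rowsum[OF P C] mult.right_neutral yC mult_zero_left)
  finally have "(\<Sum>j\<in>UNIV. (\<Sum>i\<in>UNIV. y i * P i j) - y j) = 0" by (simp add: sum_subtractf)
  then have yeq: "y j = (\<Sum>i\<in>UNIV. y i * P i j)" for j
    using yle by (subst (asm) sum_nonneg_eq_0_iff) auto
  define D where "D = {i. z i > 0}"
  have DC: "D \<subseteq> C" using zC by (force simp: D_def)
  have yD: "y i > 0 \<longleftrightarrow> i \<in> D" for i by (auto simp: y_def D_def)
  show ?thesis
  proof (cases "D = {}")
    case False
    have "(\<Sum>j\<in>D. P i j) = 1" if i: "i \<in> D" for i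
    proof -
      have "P i j = 0" if j: "j \<in> C" "j \<notin> D" for j
      proof -
        have "y i * P i j \<le> (\<Sum>k\<in>UNIV. y k * P k j)"
          by (rule member_le_sum) (auto simp: y0 nn)
        then have "y i * P i j \<le> 0" using yeq[of j] yD[of j] j y0[of j] by auto
        then show ?thesis using yD[of i] i nn[of i j] by (simp add: mult_le_0_iff)
      qed
      then have "(\<Sum>j\<in>D. P i j) = (\<Sum>j\<in>C. P i j)"
        by (intro sum.mono_neutral_left) (use DC in auto)
      then show ?thesis using C i DC by (auto simp: closedset_def)
    qed
    then have "closedset P D" using False by (simp add: closedset_def)
    then show ?thesis using minC DC by (simp add: D_def)
  qed (simp add: D_def)
qed


lemma poisson:
  fixes P :: "'s::finite \<Rightarrow> 's \<Rightarrow> real" and c :: "'s \<Rightarrow> real"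
  assumes P: "substoch P" and C: "closedset P C"
    and minC: "\<forall>D. closedset P D \<longrightarrow> D \<subseteq> C \<longrightarrow> D = C"
  shows "\<exists>h g. \<forall>i\<in>C. h i - stepv P h i = c i - g"
proof -
  define L :: "(real^'s) set" where
    "L = range (\<lambda>h. \<chi> i. if i \<in> C then h i - stepv P h i else 0)"
  define one :: "real^'s" where "one = (\<chi> i. if i \<in> C then 1 else 0)"
  define x :: "real^'s" where "x = (\<chi> i. if i \<in> C then c i else 0)"
  have subL: "subspace L"
    unfolding subspace_def L_def
  proof (intro conjI ballI allI)
    show "0 \<in> range (\<lambda>h. \<chi> i. if i \<in> C then h i - stepv P h i else 0)"
      by (rule range_eqI[of _ _ "\<lambda>_. 0"]) (auto simp: vec_eq_iff stepv_def)
  next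
    fix u v assume "u \<in> range (\<lambda>h. \<chi> i. if i \<in> C then h i - stepv P h i else 0)"
      "v \<in> range (\<lambda>h. \<chi> i. if i \<in> C then h i - stepv P h i else 0)"
    then obtain h1 h2 where "u = (\<chi> i. if i \<in> C then h1 i - stepv P h1 i else 0)"
      "v = (\<chi> i. if i \<in> C then h2 i - stepv P h2 i else 0)" by auto
    then show "u + v \<in> range (\<lambda>h. \<chi> i. if i \<in> C then h i - stepv P h i else 0)"
      by (intro range_eqI[of _ _ "\<lambda>i. h1 i + h2 i"]) (auto simp: vec_eq_iff stepv_add)
  next
    fix a :: real and u assume "u \<in> range (\<lambda>h. \<chi> i. if i \<in> C then h i - stepv P h i else 0)"
    then obtain h1 where "u = (\<chi> i. if i \<in> C then h1 i - stepv P h1 i else 0)" by auto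
    then show "a *\<^sub>R u \<in> range (\<lambda>h. \<chi> i. if i \<in> C then h i - stepv P h i else 0)"
      by (intro range_eqI[of _ _ "\<lambda>i. a * h1 i"]) (auto simp: vec_eq_iff stepv_scale algebra_simps)
  qed
  obtain y z where y: "y \<in> span (insert one L)" and z: "\<And>w. w \<in> span (insert one L) \<Longrightarrow> orthogonal z w"
    and xyz: "x = y + z"
    using orthogonal_subspace_decomp_exists by blast
  define V :: "(real^'s) set" where "V = {v. \<forall>j. j \<notin> C \<longrightarrow> v $ j = 0}"
  have "subspace V" unfolding subspace_def V_def by auto
  moreover have "insert one L \<subseteq> V" unfolding V_def L_def one_def by auto
  ultimately have "span (insert one L) \<subseteq> V" by (rule span_minimal[rotated])
  then have yC: "j \<notin> C \<Longrightarrow> y $ j = 0" for j using y by (auto simp: V_def)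
  have zC: "j \<notin> C \<Longrightarrow> z $ j = 0" for j using yC[of j] xyz by (simp add: x_def vec_eq_iff) (metis add_0 add.commute)
  have zmask: "z $ i * (if i \<in> C then e else 0) = z $ i * e" for i e using zC[of i] by auto
  have "orthogonal z one" using z span_base[of one "insert one L"] by auto
  then have zsum: "(\<Sum>i\<in>UNIV. z $ i) = 0"
    unfolding orthogonal_def inner_vec_def one_def using zmask[of _ 1] by simp
  have inv: "z $ j = (\<Sum>i\<in>UNIV. z $ i * P i j)" for j
  proof -
    define d where "d = (\<lambda>k. if k = j then 1 else (0::real))"
    have "(\<chi> i. if i \<in> C then d i - stepv P d i else 0) \<in> L" unfolding L_def by auto
    then have "orthogonal z (\<chi> i. if i \<in> C then d i - stepv P d i else 0)"
      using z span_base by blast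
    then have "(\<Sum>i\<in>UNIV. z $ i * (d i - stepv P d i)) = 0"
      unfolding orthogonal_def inner_vec_def by (simp add: zmask)
    moreover have "stepv P d i = P i j" for i proof -
      have "(\<lambda>k. P i k * d k) = (\<lambda>k. if j = k then P i k else 0)" by (auto simp: d_def)
      then show ?thesis unfolding stepv_def by (simp only:) simp
    qed
    moreover have "(\<Sum>i\<in>UNIV. z $ i * d i) = z $ j"
    proof -
      have "(\<lambda>i. z $ i * d i) = (\<lambda>i. if j = i then z $ i else 0)" by (auto simp: d_def)
      then show ?thesis by (simp only:) simp
    qed
    moreover have "(\<Sum>i\<in>UNIV. z $ i * (d i - stepv P d i)) = (\<Sum>i\<in>UNIV. z $ i * d i) - (\<Sum>i\<in>UNIV. z $ i * stepv P d i)"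
      by (simp add: right_diff_distrib sum_subtractf)
    ultimately show ?thesis by simp
  qed
  have p1: "{i. z $ i > 0} = {} \<or> {i. z $ i > 0} = C"
    by (rule invariant_pos[OF P C minC, where z="\<lambda>i. z $ i"]) (use zC inv in blast)+
  have p2: "{i. - z $ i > 0} = {} \<or> {i. - z $ i > 0} = C"
  proof (rule invariant_pos[OF P C minC, where z="\<lambda>i. - z $ i"])
    fix j show "j \<notin> C \<Longrightarrow> - z $ j = 0" using zC by simp
    have "- z $ j = - (\<Sum>i\<in>UNIV. z $ i * P i j)" using inv[of j] by simp
    then show "- z $ j = (\<Sum>i\<in>UNIV. - z $ i * P i j)" by (simp add: sum_negf)
  qed
  have Cne: "C \<noteq> {}" using C by (simp add: closedset_def)
  have z0: "z = 0"
  proof -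
    have "(\<forall>i. z $ i \<le> 0) \<or> (\<forall>i. 0 \<le> z $ i)"
    proof (cases "{i. z $ i > 0} = {}")
      case True then show ?thesis by (auto simp: not_less)
    next
      case False
      then have e1: "{i. z $ i > 0} = C" using p1 by blast
      show ?thesis
      proof (cases "{i. - z $ i > 0} = {}")
        case True then show ?thesis by (auto simp: not_less)
      next
        case False
        then have e2: "{i. - z $ i > 0} = C" using p2 by blast
        obtain i where "i \<in> C" using Cne by blast
        then have "z $ i > 0" "- z $ i > 0" using e1 e2 by blast+
        then show ?thesis by simp
      qed
    qed
    then show ?thesis
    proof
      assume a: "\<forall>i. z $ i \<le> 0"
      have "(\<Sum>i\<in>UNIV. - z $ i) = 0" using zsum by (simp add: sum_negf)
      then have "\<forall>i. - z $ i = 0" using a by (subst (asm) sum_nonneg_eq_0_iff) auto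
      then show ?thesis by (simp add: vec_eq_iff)
    next
      assume a: "\<forall>i. 0 \<le> z $ i"
      then have "\<forall>i. z $ i = 0" using zsum by (subst (asm) sum_nonneg_eq_0_iff) auto
      then show ?thesis by (simp add: vec_eq_iff)
    qed
  qed
  then have "x \<in> span (insert one L)" using xyz y by simp
  then obtain k where "x - k *\<^sub>R one \<in> span L" by (auto simp: span_insert)
  then have "x - k *\<^sub>R one \<in> L" using subL by (metis span_eq_iff)
  then obtain h where hx: "x - k *\<^sub>R one = (\<chi> i. if i \<in> C then h i - stepv P h i else 0)"
    unfolding L_def by auto
  have "\<forall>i\<in>C. h i - stepv P h i = c i - k"
  proof
    fix i assume "i \<in> C"
    then show "h i - stepv P h i = c i - k"
      using arg_cong[OF hx, of "\<lambda>v. v $ i"] by (simp add: x_def one_def)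
  qed
  then show ?thesis by blast
qed


lemma lsc_bdd:
  assumes A: "compact A" and f: "lsc_on A f"
  shows "\<exists>m. \<forall>a\<in>A. m \<le> f a"
proof -
  have "\<forall>a\<in>A. \<exists>S. open S \<and> a \<in> S \<and> (\<forall>u\<in>S. u \<in> A \<longrightarrow> f a - 1 < f u)"
  proof
    fix a assume a: "a \<in> A"
    have "f a - 1 < f a" by simp
    then have "\<forall>\<^sub>F u in at a within A. f a - 1 < f u" using f a unfolding lsc_on_def by blast
    then obtain S where "open S" "a \<in> S" "\<forall>x\<in>S. x \<noteq> a \<longrightarrow> x \<in> A \<longrightarrow> f a - 1 < f x"
      unfolding eventually_at_topological by blast
    then show "\<exists>S. open S \<and> a \<in> S \<and> (\<forall>u\<in>S. u \<in> A \<longrightarrow> f a - 1 < f u)"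
      by (intro exI[of _ S]) auto
  qed
  then obtain S where S: "\<And>a. a \<in> A \<Longrightarrow> open (S a) \<and> a \<in> S a \<and> (\<forall>u\<in>S a. u \<in> A \<longrightarrow> f a - 1 < f u)"
    by metis
  obtain T where T: "T \<subseteq> A" "finite T" "A \<subseteq> (\<Union>a\<in>T. S a)"
    using compactE_image[OF A, of A S] S by blast
  define m where "m = Min (insert 0 ((\<lambda>a. f a - 1) ` T))"
  have "m \<le> f u" if u: "u \<in> A" for u
  proof -
    obtain a where a: "a \<in> T" "u \<in> S a" using T u by blast
    have "m \<le> f a - 1" unfolding m_def using T a by (intro Min_le) auto
    moreover have "f a - 1 < f u" using S[of a] a T u by blast
    ultimately show ?thesis by linarith
  qed
  then show ?thesis by blast
qed

lemma usc_bdd: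
  assumes A: "compact A" and f: "usc_on A f"
  shows "\<exists>M. \<forall>a\<in>A. f a \<le> M"
proof -
  have "lsc_on A (\<lambda>u. - f u)" unfolding lsc_on_def
  proof (intro ballI allI impI)
    fix a t assume a: "a \<in> A" and t: "t < - f a"
    then have "f a < - t" by linarith
    then have "\<forall>\<^sub>F u in at a within A. f u < - t" using f a unfolding usc_on_def by blast
    then show "\<forall>\<^sub>F u in at a within A. t < - f u" by (rule eventually_mono) linarith
  qed
  then obtain m where "\<forall>a\<in>A. m \<le> - f a" using lsc_bdd[OF A] by blast
  then show ?thesis by (intro exI[of _ "- m"]) force
qed

lemma closed_prolong:
  assumes Q: "substoch Q" and C: "closedset Q C"
  shows "\<exists>i. nonterm_prob Q i > 0"
proof -
  have nn: "\<And>a b. 0 \<le> Q a b" using Q by (simp add: substoch_def nonnegm_def)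
  have ge: "\<forall>i\<in>C. 1 \<le> (stepv Q ^^ k) (\<lambda>_. 1) i" for k
  proof (induction k)
    case 0 then show ?case by simp
  next
    case (Suc k)
    show ?case
    proof
      fix i assume i: "i \<in> C"
      have "(\<Sum>j\<in>C. Q i j) \<le> (\<Sum>j\<in>C. Q i j * (stepv Q ^^ k) (\<lambda>_. 1) j)"
        using Suc nn by (intro sum_mono) (metis mult_left_mono mult.right_neutral)
      also have "\<dots> \<le> (\<Sum>j\<in>UNIV. Q i j * (stepv Q ^^ k) (\<lambda>_. 1) j)"
        by (rule sum_mono2) (auto intro: mult_nonneg_nonneg nn one_nonneg[OF Q])
      finally show "1 \<le> (stepv Q ^^ Suc k) (\<lambda>_. 1) i"
        using C i by (simp add: closedset_def stepv_def)
    qed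
  qed
  obtain i where i: "i \<in> C" using C by (auto simp: closedset_def)
  have "1 \<le> nonterm_prob Q i" unfolding nonterm_prob_def
    by (rule cINF_greatest) (use ge i in auto)
  then show ?thesis by (intro exI[of _ i]) linarith
qed


lemma iter_scale: "(stepv P ^^ k) (\<lambda>i. a * f i) = (\<lambda>i. a * (stepv P ^^ k) f i)"
  by (induction k) (auto simp: stepv_scale)

lemma gm_substoch:
  assumes "game_model U V p c" "\<mu> \<in> Pi_SD U" "\<nu> \<in> Pi_SD V"
  shows "substoch (Pmat p \<mu> \<nu>)"
  using assms unfolding game_model_def Pi_SD_def substoch_def nonnegm_def Pmat_def by auto

lemma part2:
  fixes U :: "'s::finite \<Rightarrow> 'u::polish_space set"
    and V :: "'s \<Rightarrow> 'v::polish_space set"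
  assumes gm: "game_model U V p c" and mu: "\<mu> \<in> Pi_SD U" and nu: "\<nu> \<in> Pi_SD V"
    and np: "\<not> prolonging p \<mu> \<nu>"
    and xb: "xbar = T_mu V p c \<mu> xbar" and xt: "xtil = T_nu U p c \<nu> xtil"
  shows "xtil i \<le> xbar i"
proof -
  define P where "P = Pmat p \<mu> \<nu>"
  have P: "substoch P" unfolding P_def by (rule gm_substoch[OF gm mu nu])
  have nn: "nonnegm P" using P by (simp add: substoch_def)
  define Bx where "Bx = (\<Sum>j\<in>UNIV. \<bar>xbar j\<bar>)"
  define Bt where "Bt = (\<Sum>j\<in>UNIV. \<bar>xtil j\<bar>)"
  have xbB: "\<bar>xbar j\<bar> \<le> Bx" for j unfolding Bx_def by (rule member_le_sum) auto
  have xtB: "\<bar>xtil j\<bar> \<le> Bt" for j unfolding Bt_def by (rule member_le_sum) auto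
  have up: "T_pair p c \<mu> \<nu> xbar l \<le> xbar l" for l
  proof -
    have cV: "compact (V l)" and uU: "\<mu> l \<in> U l" using gm mu by (auto simp: game_model_def Pi_SD_def)
    have "usc_on (V l) (\<lambda>v. c l (\<mu> l) v)" using gm uU by (auto simp: game_model_def)
    then obtain M where M: "\<forall>v\<in>V l. c l (\<mu> l) v \<le> M" using usc_bdd[OF cV] by blast
    have "bdd_above ((\<lambda>\<nu>'. T_pair p c \<mu> \<nu>' xbar l) ` Pi_SD V)"
    proof (rule bdd_aboveI[of _ "M + Bx"])
      fix y assume "y \<in> (\<lambda>\<nu>'. T_pair p c \<mu> \<nu>' xbar l) ` Pi_SD V"
      then obtain \<nu>' where n': "\<nu>' \<in> Pi_SD V" and y: "y = T_pair p c \<mu> \<nu>' xbar l" by auto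
      have "\<bar>stepv (Pmat p \<mu> \<nu>') xbar l\<bar> \<le> Bx" by (rule stepv_abs[OF gm_substoch[OF gm mu n'] xbB])
      moreover have "c l (\<mu> l) (\<nu>' l) \<le> M" using M n' by (auto simp: Pi_SD_def)
      ultimately show "y \<le> M + Bx" unfolding y T_pair_def cvec_def by linarith
    qed
    then have "T_pair p c \<mu> \<nu> xbar l \<le> (SUP \<nu>'\<in>Pi_SD V. T_pair p c \<mu> \<nu>' xbar l)"
      by (rule cSUP_upper[OF nu])
    also have "\<dots> = xbar l" using xb unfolding T_mu_def by (metis (no_types, lifting))
    finally show ?thesis .
  qed
  have lo: "xtil l \<le> T_pair p c \<mu> \<nu> xtil l" for l
  proof -
    have cU: "compact (U l)" and vV: "\<nu> l \<in> V l" using gm nu by (auto simp: game_model_def Pi_SD_def)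
    have "lsc_on (U l) (\<lambda>u. c l u (\<nu> l))" using gm vV by (auto simp: game_model_def)
    then obtain m where m: "\<forall>u\<in>U l. m \<le> c l u (\<nu> l)" using lsc_bdd[OF cU] by blast
    have "bdd_below ((\<lambda>\<mu>'. T_pair p c \<mu>' \<nu> xtil l) ` Pi_SD U)"
    proof (rule bdd_belowI[of _ "m - Bt"])
      fix y assume "y \<in> (\<lambda>\<mu>'. T_pair p c \<mu>' \<nu> xtil l) ` Pi_SD U"
      then obtain \<mu>' where m': "\<mu>' \<in> Pi_SD U" and y: "y = T_pair p c \<mu>' \<nu> xtil l" by auto
      have "\<bar>stepv (Pmat p \<mu>' \<nu>) xtil l\<bar> \<le> Bt" by (rule stepv_abs[OF gm_substoch[OF gm m' nu] xtB])
      moreover have "m \<le> c l (\<mu>' l) (\<nu> l)" using m m' by (auto simp: Pi_SD_def)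
      ultimately show "m - Bt \<le> y" unfolding y T_pair_def cvec_def by linarith
    qed
    then have "(INF \<mu>'\<in>Pi_SD U. T_pair p c \<mu>' \<nu> xtil l) \<le> T_pair p c \<mu> \<nu> xtil l"
      by (rule cINF_lower[OF _ mu])
    moreover have "xtil l = (INF \<mu>'\<in>Pi_SD U. T_pair p c \<mu>' \<nu> xtil l)"
      using xt unfolding T_nu_def by (metis (no_types, lifting))
    ultimately show ?thesis by simp
  qed
  define d where "d l = xbar l - xtil l" for l
  have dP: "stepv P d l \<le> d l" for l
    using up[of l] lo[of l] unfolding d_def T_pair_def P_def by (simp add: stepv_diff)
  have dk: "(stepv P ^^ k) d l \<le> d l" for k l
  proof (induction k arbitrary: l)
    case (Suc k)
    have "(stepv P ^^ k) (stepv P d) l \<le> (stepv P ^^ k) d l" by (rule iter_mono[OF nn dP])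
    then show ?case using Suc[of l] by (simp only: iter_Suc_right)
  qed simp
  define B where "B = (\<Sum>j\<in>UNIV. \<bar>d j\<bar>)"
  have dB: "- B \<le> d j" for j unfolding B_def using member_le_sum[of j UNIV "\<lambda>j. \<bar>d j\<bar>"] by auto
  have dlow: "- B * (stepv P ^^ k) (\<lambda>_. 1) l \<le> d l" for k l
  proof -
    have "(stepv P ^^ k) (\<lambda>j. - B * 1) l \<le> (stepv P ^^ k) d l" by (rule iter_mono[OF nn]) (simp add: dB)
    then show ?thesis using dk[of k l] by (simp add: iter_scale[where P=P and k=k and a="- B" and f="\<lambda>_. 1", simplified])
  qed
  have "0 \<le> d i"
  proof (rule ccontr)
    assume neg: "\<not> 0 \<le> d i"
    then have Bpos: "B > 0" using dB[of i] unfolding B_def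
      by (metis abs_ge_zero abs_le_zero_iff le_less member_le_sum finite UNIV_I order.trans
          sum_nonneg abs_of_nonpos linorder_not_le)
    have "nonterm_prob P i \<le> 0" using np unfolding prolonging_def P_def by (simp add: not_less)
    moreover have "0 < - d i / B" using neg Bpos by (intro divide_pos_pos) auto
    ultimately have "(INF k. (stepv P ^^ k) (\<lambda>_. 1) i) < - d i / B"
      unfolding nonterm_prob_def by linarith
    moreover have "bdd_below (range (\<lambda>k. (stepv P ^^ k) (\<lambda>_. 1) i))"
      by (rule bdd_belowI[of _ 0]) (use one_nonneg[OF P] in auto)
    ultimately obtain k where k: "(stepv P ^^ k) (\<lambda>_. 1) i < - d i / B"
      by (subst (asm) cINF_less_iff) auto
    then have "B * (stepv P ^^ k) (\<lambda>_. 1) i < - d i" using Bpos by (simp add: field_simps)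
    then show False using dlow[of k i] by linarith
  qed
  then show ?thesis by (simp add: d_def)
qed


lemma part1:
  fixes U :: "'s::finite \<Rightarrow> 'u::polish_space set"
    and V :: "'s \<Rightarrow> 'v::polish_space set"
  assumes gm: "game_model U V p c" and mu: "\<mu> \<in> Pi_SD U" and nu: "\<nu> \<in> Pi_SD V"
    and e1: "ess_proper1 V p c \<mu>" and e2: "ess_proper2 U p c \<nu>"
  shows "\<not> prolonging p \<mu> \<nu>"
proof
  assume pr: "prolonging p \<mu> \<nu>"
  define P where "P = Pmat p \<mu> \<nu>"
  have P: "substoch P" unfolding P_def by (rule gm_substoch[OF gm mu nu])
  obtain C0 where "closedset P C0" using exists_closed[OF P] pr unfolding prolonging_def P_def by blast
  then obtain C where C: "closedset P C" and minC: "\<forall>D. closedset P D \<longrightarrow> D \<subseteq> C \<longrightarrow> D = C"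
    using exists_min_closed by blast
  obtain h g where pois: "\<forall>i\<in>C. h i - stepv P h i = cvec c \<mu> \<nu> i - g"
    using poisson[OF P C minC] by blast
  have Cz: "\<And>i j. i \<in> C \<Longrightarrow> j \<notin> C \<Longrightarrow> P i j = 0" using closed_zero[OF P C] by blast
  have Cne: "C \<noteq> {}" using C by (simp add: closedset_def)
  obtain \<nu>' where nu': "\<nu>' \<in> Pi_SD V" and np1: "\<not> prolonging p \<mu> \<nu>'" using e1 unfolding ess_proper1_def by blast
  obtain \<mu>' where mu': "\<mu>' \<in> Pi_SD U" and np2: "\<not> prolonging p \<mu>' \<nu>" using e2 unfolding ess_proper2_def by blast
  show False
  proof (cases "0 \<le> g")
    case True
    define \<nu>'' where "\<nu>'' i = (if i \<in> C then \<nu> i else \<nu>' i)" for i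
    have nu'': "\<nu>'' \<in> Pi_SD V" using nu nu' by (auto simp: Pi_SD_def \<nu>''_def)
    have Qe: "Pmat p \<mu> \<nu>'' = (\<lambda>i j. if i \<in> C then P i j else Pmat p \<mu> \<nu>' i j)"
      by (auto simp: fun_eq_iff Pmat_def P_def \<nu>''_def)
    have ce: "cvec c \<mu> \<nu>'' = (\<lambda>i. if i \<in> C then cvec c \<mu> \<nu> i else cvec c \<mu> \<nu>' i)"
      by (auto simp: fun_eq_iff cvec_def \<nu>''_def)
    have nt: "\<And>i. nonterm_prob (Pmat p \<mu> \<nu>') i \<le> 0" using np1 by (simp add: prolonging_def not_less)
    obtain H where H: "\<forall>i. H i - stepv (Pmat p \<mu> \<nu>'') H i \<le> cvec c \<mu> \<nu>'' i"
    proof -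
      have pois1: "\<And>i. i \<in> C \<Longrightarrow> h i - stepv P h i = cvec c \<mu> \<nu> i - g" using pois by blast
      obtain H0 where H0: "\<forall>i. H0 i - stepv (\<lambda>i j. if i \<in> C then P i j else Pmat p \<mu> \<nu>' i j) H0 i
                 \<le> (if i \<in> C then cvec c \<mu> \<nu> i else cvec c \<mu> \<nu>' i)"
        apply (rule mod_lower[where C=C and ca="cvec c \<mu> \<nu>'" and P=P and Pa="Pmat p \<mu> \<nu>'" and h=h and g=g and c="cvec c \<mu> \<nu>", THEN exE])
        apply (rule P) apply (rule gm_substoch[OF gm mu nu']) apply (rule nt) apply (erule (1) Cz)
        apply (erule pois1) apply (rule True) apply assumption done
      have "\<forall>i. H0 i - stepv (Pmat p \<mu> \<nu>'') H0 i \<le> cvec c \<mu> \<nu>'' i"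
        unfolding Qe ce by (rule H0)
      then show ?thesis by (rule that)
    qed
    have Q: "substoch (Pmat p \<mu> \<nu>'')" by (rule gm_substoch[OF gm mu nu''])
    have nm: "\<And>i. cost p c \<mu> \<nu>'' i \<noteq> -\<infinity>" using cost_lower[OF Q, of H] H by blast
    have "closedset (Pmat p \<mu> \<nu>'') C" using C unfolding Qe closedset_def by auto
    then have "prolonging p \<mu> \<nu>''" using closed_prolong[OF Q] by (simp add: prolonging_def)
    then obtain i where "cost p c \<mu> \<nu>'' i = -\<infinity>" using e1 nu'' unfolding ess_proper1_def by blast
    then show False using nm by simp
  next
    case False
    define \<mu>'' where "\<mu>'' i = (if i \<in> C then \<mu> i else \<mu>' i)" for i
    have mu'': "\<mu>'' \<in> Pi_SD U" using mu mu' by (auto simp: Pi_SD_def \<mu>''_def)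
    have Qe: "Pmat p \<mu>'' \<nu> = (\<lambda>i j. if i \<in> C then P i j else Pmat p \<mu>' \<nu> i j)"
      by (auto simp: fun_eq_iff Pmat_def P_def \<mu>''_def)
    have ce: "(\<lambda>i. - cvec c \<mu>'' \<nu> i) = (\<lambda>i. if i \<in> C then - cvec c \<mu> \<nu> i else - cvec c \<mu>' \<nu> i)"
      by (auto simp: fun_eq_iff cvec_def \<mu>''_def)
    have nt: "\<And>i. nonterm_prob (Pmat p \<mu>' \<nu>) i \<le> 0" using np2 by (simp add: prolonging_def not_less)
    have pois': "\<And>i. i \<in> C \<Longrightarrow> (\<lambda>i. - h i) i - stepv P (\<lambda>i. - h i) i = (\<lambda>i. - cvec c \<mu> \<nu> i) i - (- g)"
    proof -
      fix i assume "i \<in> C"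
      then have "h i - stepv P h i = cvec c \<mu> \<nu> i - g" using pois by blast
      then show "(\<lambda>i. - h i) i - stepv P (\<lambda>i. - h i) i = (\<lambda>i. - cvec c \<mu> \<nu> i) i - (- g)"
        by (simp add: stepv_neg)
    qed
    obtain H where H: "\<forall>i. H i - stepv (Pmat p \<mu>'' \<nu>) H i \<le> - cvec c \<mu>'' \<nu> i"
    proof -
      have g': "0 \<le> - g" using False by simp
      obtain H0 where H0: "\<forall>i. H0 i - stepv (\<lambda>i j. if i \<in> C then P i j else Pmat p \<mu>' \<nu> i j) H0 i
                 \<le> (if i \<in> C then - cvec c \<mu> \<nu> i else - cvec c \<mu>' \<nu> i)"
        apply (rule mod_lower[where C=C and ca="\<lambda>i. - cvec c \<mu>' \<nu> i" and P=P and Pa="Pmat p \<mu>' \<nu>" and h="\<lambda>i. - h i" and g="- g" and c="\<lambda>i. - cvec c \<mu> \<nu> i", THEN exE])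
        apply (rule P) apply (rule gm_substoch[OF gm mu' nu]) apply (rule nt) apply (erule (1) Cz)
        apply (erule pois') apply (rule g') apply assumption done
      have "\<forall>i. H0 i - stepv (Pmat p \<mu>'' \<nu>) H0 i \<le> (\<lambda>i. - cvec c \<mu>'' \<nu> i) i"
      proof
        fix i show "H0 i - stepv (Pmat p \<mu>'' \<nu>) H0 i \<le> (\<lambda>i. - cvec c \<mu>'' \<nu> i) i"
          using H0[rule_format, of i] ce[THEN fun_cong, of i] unfolding Qe by simp
      qed
      then show ?thesis by (intro that) simp
    qed
    have H': "cvec c \<mu>'' \<nu> i \<le> (\<lambda>i. - H i) i - stepv (Pmat p \<mu>'' \<nu>) (\<lambda>i. - H i) i" for i
      using H[rule_format, of i] by (simp add: stepv_neg)
    have Q: "substoch (Pmat p \<mu>'' \<nu>)" by (rule gm_substoch[OF gm mu'' nu])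
    have nm: "\<And>i. cost p c \<mu>'' \<nu> i \<noteq> \<infinity>" using cost_upper[OF Q H'] by simp
    have "closedset (Pmat p \<mu>'' \<nu>) C" using C unfolding Qe closedset_def by auto
    then have "prolonging p \<mu>'' \<nu>" using closed_prolong[OF Q] by (simp add: prolonging_def)
    then obtain i where "cost p c \<mu>'' \<nu> i = \<infinity>" using e2 mu'' unfolding ess_proper2_def by blast
    then show False using nm by simp
  qed
qed

theorem lemma2p2:
  fixes U :: "'s::finite \<Rightarrow> 'u::polish_space set"
    and V :: "'s \<Rightarrow> 'v::polish_space set"
    and p :: "'s \<Rightarrow> 's \<Rightarrow> 'u \<Rightarrow> 'v \<Rightarrow> real"
    and c :: "'s \<Rightarrow> 'u \<Rightarrow> 'v \<Rightarrow> real"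
    and \<mu> :: "'s \<Rightarrow> 'u" and \<nu> :: "'s \<Rightarrow> 'v"
  assumes "game_model U V p c"
    and "\<mu> \<in> Pi_SD U" and "\<nu> \<in> Pi_SD V"
    and "ess_proper1 V p c \<mu>" and "ess_proper2 U p c \<nu>"
  shows "\<not> prolonging p \<mu> \<nu> \<and>
         (\<forall>xbar xtil. xbar = T_mu V p c \<mu> xbar \<longrightarrow> xtil = T_nu U p c \<nu> xtil
             \<longrightarrow> (\<forall>i. xbar i \<ge> xtil i))"
proof (intro conjI allI impI)
  show "\<not> prolonging p \<mu> \<nu>" by (rule part1[OF assms])
  fix xbar xtil i
  assume "xbar = T_mu V p c \<mu> xbar" "xtil = T_nu U p c \<nu> xtil"
  then show "xtil i \<le> xbar i" by (rule part2[OF assms(1-3) part1[OF assms]])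
qed

end
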